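(* Let $m,n\ge 1$, let $a_1,\dots,a_n\in\mathbb{C}$ be distinct, let $m_1,\dots,m_n\ge1$ be integers, and let $c_0,\dots,c_{m-1},b_k^{(j)}\in\mathbb{C}$. Let $$r(\lambda)=\lambda^m-c_{m-1}\lambda^{m-1}-\cdots-c_1\lambda-c_0-\sum_{j=1}^n\sum_{k=1}^{m_j}\frac{b_k^{(j)}}{(\lambda-a_j)^k},$$ and let $\mathcal{C}_r$ be its associated block matrix (defined in the context). Then every zero of $r(\lambda)$ is an eigenvalue of $\mathcal{C}_r$.
   Context: A zero of $r$ is a $\lambda_0\in\mathbb{C}\setminus\{a_1,\dots,a_n\}$ with $r(\lambda_0)=0$. Let $N=m+\sum_{j}\frac{m_j(m_j+1)}2$. The associated block matrix is the $N\times N$ matrix $$\mathcal{C}_r=\begin{bmatrix}\mathcal{A}_n&0&\cdots&0&-\mathcal{F}_n\\ 0&\mathcal{A}_{n-1}&\cdots&0&-\mathcal{F}_{n-1}\\ \vdots&&\ddots&&\vdots\\ 0&0&\cdots&\mathcal{A}_1&-\mathcal{F}_1\\ \mathcal{B}_n&\mathcal{B}_{n-1}&\cdots&\mathcal{B}_1&\mathcal{B}_0\end{bmatrix},$$ where for $1\le j\le n$: $\mathcal{A}_j=\mathrm{diag}(A^{(j)}_{m_j},\dots,A^{(j)}_1)$ with $A^{(j)}_k$ the $k\times k$ upper bidiagonal matrix with $a_j$ on the diagonal and $1$ on the superdiagonal; $\mathcal{F}_j=\begin{bmatrix}F_{m_j}\\ \vdots\\ F_1\end{bmatrix}$ with $F_k$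 the $k\times m$ matrix whose only nonzero entry is $1$ in position $(k,1)$; $\mathcal{B}_j=\begin{bmatrix}B^{(j)}_{m_j}&\cdots&B^{(j)}_1\end{bmatrix}$ with $B^{(j)}_k$ the $m\times k$ matrix whose only nonzero entry is $-b^{(j)}_k$ in position $(m,1)$; and $\mathcal{B}_0$ is the $m\times m$ companion matrix with $1$'s on the superdiagonal, last row $(c_0,c_1,\dots,c_{m-1})$, and zeros elsewhere. *)

theory Defs
  imports "Jordan_Normal_Form.Char_Poly"
begin

definition rfun :: "nat \<Rightarrow> nat \<Rightarrow> (nat \<Rightarrow> complex) \<Rightarrow> (nat \<Rightarrow> nat) \<Rightarrow> (nat \<Rightarrow> complex)
    \<Rightarrow> (nat \<Rightarrow> nat \<Rightarrow> complex) \<Rightarrow> complex \<Rightarrow> complex" where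
  "rfun m n a mm c b z =
     z ^ m - (\<Sum>i<m. c i * z ^ i)
     - (\<Sum>j=1..n. \<Sum>k=1..mm j. b j k / (z - a j) ^ k)"

text \<open>Row/column labels of the block matrix, in order:
  Inl (j,k,i) is row i (1..k) of the sub-block A_k^(j); blocks ordered j = n,...,1 and
  within block j, k = m_j,...,1. Inr p (p = 1..m) are the rows of the last block row.\<close>
definition labels :: "nat \<Rightarrow> nat \<Rightarrow> (nat \<Rightarrow> nat) \<Rightarrow> ((nat \<times> nat \<times> nat) + nat) list" where
  "labels m n mm =
     concat (map (\<lambda>j. concat (map (\<lambda>k. map (\<lambda>i. Inl (j, k, i)) [1..<k+1]) (rev [1..<mm j + 1])))
                 (rev [1..<n+1]))
     @ map Inr [1..<m+1]"

definition entry :: "nat \<Rightarrow> (nat \<Rightarrow> complex) \<Rightarrow> (nat \<Rightarrow> complex) \<Rightarrow> (nat \<Rightarrow> nat \<Rightarrow> complex)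
    \<Rightarrow> ((nat \<times> nat \<times> nat) + nat) \<Rightarrow> ((nat \<times> nat \<times> nat) + nat) \<Rightarrow> complex" where
  "entry m a c b x y = (case (x, y) of
      (Inl (j, k, i), Inl (j', k', i')) \<Rightarrow>
         (if j = j' \<and> k = k' then (if i' = i then a j else if i' = i + 1 then 1 else 0) else 0)
    | (Inl (j, k, i), Inr p) \<Rightarrow> (if i = k \<and> p = 1 then -1 else 0)
    | (Inr p, Inl (j, k, i)) \<Rightarrow> (if p = m \<and> i = 1 then - b j k else 0)
    | (Inr p, Inr q) \<Rightarrow> (if p = m then c (q - 1) else if q = p + 1 then 1 else 0))"

definition block_matrix :: "nat \<Rightarrow> nat \<Rightarrow> (nat \<Rightarrow> complex) \<Rightarrow> (nat \<Rightarrow> nat) \<Rightarrow> (nat \<Rightarrow> complex)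
    \<Rightarrow> (nat \<Rightarrow> nat \<Rightarrow> complex) \<Rightarrow> complex mat" where
  "block_matrix m n a mm c b =
     (let L = labels m n mm
      in mat (length L) (length L) (\<lambda>(r, s). entry m a c b (L ! r) (L ! s)))"

end

theory Submission imports Defs begin

definition SS :: "nat \<Rightarrow> (nat \<Rightarrow> nat) \<Rightarrow> (nat \<times> nat \<times> nat) set" where
  "SS n mm = (SIGMA j:{1..n}. SIGMA k:{1..mm j}. {1..k})"

lemma set_labels: "set (labels m n mm) = Inl ` SS n mm \<union> Inr ` {1..m}"
  unfolding labels_def SS_def by (auto simp: image_iff)

lemma distinct_concat_map:
  "distinct xs \<Longrightarrow> (\<And>x. x \<in> set xs \<Longrightarrow> distinct (f x)) \<Longrightarrow>
   (\<And>x y. x \<in> set xs \<Longrightarrow> y \<in> set xs \<Longrightarrow> x \<noteq> y \<Longrightarrow> set (f x) \<inter> set (f y) = {}) \<Longrightarrow>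
   distinct (concat (map f xs))"
  by (induction xs) auto

lemma distinct_labels: "distinct (labels m n mm)"
proof -
  have "distinct (concat (map (\<lambda>j. concat (map (\<lambda>k. map (\<lambda>i. Inl (j, k, i)) [1..<k+1]) (rev [1..<mm j + 1])))
                 (rev [1..<n+1])))" (is "distinct ?A")
    by (rule distinct_concat_map, simp, rule distinct_concat_map, simp,
        auto simp: distinct_map inj_on_def)
  moreover have "distinct (map Inr [1..<m+1] :: ((nat \<times> nat \<times> nat) + nat) list)"
    by (simp add: distinct_map)
  moreover have "set ?A \<inter> set (map Inr [1..<m+1]) = {}" by auto
  ultimately show ?thesis unfolding labels_def by simp
qed

lemma finite_SS: "finite (SS n mm)" unfolding SS_def by auto

lemma sum_labels: "(\<Sum>y\<in>set (labels m n mm). g y) = (\<Sum>t\<in>SS n mm. g (Inl t)) + (\<Sum>p\<in>{1..m}. g (Inr p))"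
  unfolding set_labels
  by (subst sum.union_disjoint) (auto simp: finite_SS sum.reindex)


fun fv :: "complex \<Rightarrow> (nat \<Rightarrow> complex) \<Rightarrow> ((nat \<times> nat \<times> nat) + nat) \<Rightarrow> complex" where
  "fv z a (Inl (j, k, i)) = - 1 / (z - a j) ^ (k - i + 1)"
| "fv z a (Inr p) = z ^ (p - 1)"

lemma sum_Sigma3:
  assumes "finite A" "\<And>j. finite (B j)" "\<And>j k. finite (C j k)"
  shows "(\<Sum>t\<in>(SIGMA j:A. SIGMA k:B j. C j k). g t) = (\<Sum>j\<in>A. \<Sum>k\<in>B j. \<Sum>i\<in>C j k. g (j,k,i))"
proof -
  have "(\<Sum>j\<in>A. \<Sum>k\<in>B j. \<Sum>i\<in>C j k. g (j,k,i)) = (\<Sum>j\<in>A. \<Sum>p\<in>(SIGMA k:B j. C j k). g (j,p))"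
    by (intro sum.cong refl) (simp add: sum.Sigma assms split_def)
  also have "\<dots> = (\<Sum>t\<in>(SIGMA j:A. SIGMA k:B j. C j k). g t)"
    by (simp add: sum.Sigma assms split_def)
  finally show ?thesis by simp
qed

lemma row_Inl:
  assumes "(j,k,i) \<in> SS n mm" "m \<ge> 1" "z \<notin> a ` {1..n}"
  shows "(\<Sum>y\<in>set (labels m n mm). entry m a c b (Inl (j,k,i)) y * fv z a y) = z * fv z a (Inl (j,k,i))"
proof -
  have j: "j \<in> {1..n}" and ik: "1 \<le> i" "i \<le> k" using assms(1) by (auto simp: SS_def)
  have w: "z - a j \<noteq> 0" using assms(3) j by auto
  have 1: "(\<Sum>t\<in>SS n mm. entry m a c b (Inl (j,k,i)) (Inl t) * fv z a (Inl t))
     = (\<Sum>t\<in>SS n mm. (if t = (j,k,i) then a j * fv z a (Inl (j,k,i)) else 0)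
           + (if t = (j,k,i+1) then fv z a (Inl (j,k,i+1)) else 0))"
    by (rule sum.cong) (auto simp: entry_def split: if_splits)
  have 2: "(\<Sum>p\<in>{1..m}. entry m a c b (Inl (j,k,i)) (Inr p) * fv z a (Inr p))
     = (\<Sum>p\<in>{1..m}. if p = 1 then (if i = k then -1 else 0) else 0)"
    by (rule sum.cong) (auto simp: entry_def)
  have 3: "(j,k,i+1) \<in> SS n mm \<longleftrightarrow> i < k" using assms(1) by (auto simp: SS_def)
  show ?thesis
  proof (cases "i < k")
    case True
    define e where "e = k - (i+1)"
    have e: "k - i + 1 = Suc (Suc e)" "k - (i+1) + 1 = Suc e" using True by (simp_all add: e_def)
    have alg: "a j * (- 1 / (z - a j) ^ Suc (Suc e)) + - 1 / (z - a j) ^ Suc e = z * (- 1 / (z - a j) ^ Suc (Suc e))"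
    proof -
      define w where "w = z - a j"
      have aj: "a j = z - w" by (simp add: w_def)
      have "w \<noteq> 0" using w by (simp add: w_def)
      then show ?thesis unfolding aj w_def[symmetric] by (simp add: field_simps)
    qed
    have "(j,k,i+1) \<in> SS n mm" using 3 True by simp
    then have "(\<Sum>y\<in>set (labels m n mm). entry m a c b (Inl (j,k,i)) y * fv z a y)
       = a j * fv z a (Inl(j,k,i)) + fv z a (Inl(j,k,i+1))"
      unfolding sum_labels 1 2 sum.distrib using True assms(1,2) 
      by (simp add: finite_SS del: fv.simps)
    also have "\<dots> = z * fv z a (Inl (j,k,i))" unfolding fv.simps e by (rule alg)
    finally show ?thesis .
  next
    case False
    then have "i = k" using ik by simp
    then show ?thesis
      unfolding sum_labels 1 2 sum.distrib using assms(1,2) 3 w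
      by (simp add: finite_SS field_simps)
  qed
qed

lemma row_Inr_lt:
  assumes "p < m" "1 \<le> p"
  shows "(\<Sum>y\<in>set (labels m n mm). entry m a c b (Inr p) y * fv z a y) = z * fv z a (Inr p)"
proof -
  have 1: "(\<Sum>t\<in>SS n mm. entry m a c b (Inr p) (Inl t) * fv z a (Inl t)) = 0"
    by (rule sum.neutral) (use assms in \<open>auto simp: entry_def\<close>)
  have 2: "(\<Sum>q\<in>{1..m}. entry m a c b (Inr p) (Inr q) * fv z a (Inr q))
     = (\<Sum>q\<in>{1..m}. if q = p + 1 then z ^ p else 0)"
    by (rule sum.cong) (use assms in \<open>auto simp: entry_def\<close>)
  show ?thesis unfolding sum_labels 1 2 using assms
    by (cases p) auto
qed

lemma row_Inr_m:
  assumes "1 \<le> m" "z \<notin> a ` {1..n}" "rfun m n a mm c b z = 0"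
  shows "(\<Sum>y\<in>set (labels m n mm). entry m a c b (Inr m) y * fv z a y) = z * fv z a (Inr m)"
proof -
  have 1: "(\<Sum>t\<in>SS n mm. entry m a c b (Inr m) (Inl t) * fv z a (Inl t))
     = (\<Sum>j=1..n. \<Sum>k=1..mm j. b j k / (z - a j) ^ k)"
  proof -
    have "(\<Sum>t\<in>SS n mm. entry m a c b (Inr m) (Inl t) * fv z a (Inl t))
       = (\<Sum>(j,k,i)\<in>SS n mm. if i = 1 then b j k / (z - a j) ^ k else 0)"
    proof (rule sum.cong)
      fix t assume "t \<in> SS n mm"
      then obtain j k i where t: "t = (j,k,i)" "1 \<le> k" by (cases t) (auto simp: SS_def)
      obtain k' where "k = Suc k'" using t(2) by (cases k) auto
      then show "entry m a c b (Inr m) (Inl t) * fv z a (Inl t) = (case t of (j,k,i) \<Rightarrow> if i = 1 then b j k / (z - a j) ^ k else 0)"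
        unfolding t by (simp add: entry_def)
    qed simp
    also have "\<dots> = (\<Sum>j=1..n. \<Sum>k=1..mm j. \<Sum>i=1..k. if i = 1 then b j k / (z - a j) ^ k else 0)"
      unfolding SS_def by (subst sum_Sigma3) (auto simp: split_def)
    also have "\<dots> = (\<Sum>j=1..n. \<Sum>k=1..mm j. b j k / (z - a j) ^ k)"
      by (intro sum.cong refl) auto
    finally show ?thesis .
  qed
  have 2: "(\<Sum>q\<in>{1..m}. entry m a c b (Inr m) (Inr q) * fv z a (Inr q))
     = (\<Sum>i<m. c i * z ^ i)"
  proof -
    have "(\<Sum>q\<in>{1..m}. entry m a c b (Inr m) (Inr q) * fv z a (Inr q)) = (\<Sum>q\<in>{1..m}. c (q - 1) * z ^ (q - 1))"
      by (rule sum.cong) (auto simp: entry_def)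
    also have "\<dots> = (\<Sum>i<m. c i * z ^ i)"
      by (rule sum.reindex_bij_witness[where i="\<lambda>i. i + 1" and j="\<lambda>q. q - 1"]) auto
    finally show ?thesis .
  qed
  have "z * z ^ (m - 1) = z ^ m" using assms(1) by (cases m) auto
  then show ?thesis unfolding sum_labels 1 2 using assms(3) by (simp add: rfun_def) (metis diff_eq_eq)
qed

lemma row_all:
  assumes "x \<in> set (labels m n mm)" "1 \<le> m" "z \<notin> a ` {1..n}" "rfun m n a mm c b z = 0"
  shows "(\<Sum>y\<in>set (labels m n mm). entry m a c b x y * fv z a y) = z * fv z a x"
proof (cases x)
  case (Inl t)
  then obtain j k i where "x = Inl (j,k,i)" "(j,k,i) \<in> SS n mm"
    using assms(1) unfolding set_labels by (cases t) auto
  then show ?thesis using row_Inl assms by blast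
next
  case (Inr p)
  then have p: "1 \<le> p" "p \<le> m" using assms(1) unfolding set_labels by auto
  show ?thesis
  proof (cases "p = m")
    case True
    then show ?thesis using Inr row_Inr_m assms by blast
  next
    case False
    then show ?thesis using Inr row_Inr_lt p by auto
  qed
qed

theorem corollary3p2:
  fixes m n :: nat and a :: "nat \<Rightarrow> complex" and mm :: "nat \<Rightarrow> nat"
    and c :: "nat \<Rightarrow> complex" and b :: "nat \<Rightarrow> nat \<Rightarrow> complex" and z0 :: complex
  assumes "m \<ge> 1" and "n \<ge> 1"
    and "inj_on a {1..n}"
    and "\<And>j. j \<in> {1..n} \<Longrightarrow> mm j \<ge> 1"
    and "z0 \<notin> a ` {1..n}"
    and "rfun m n a mm c b z0 = 0"
  shows "eigenvalue (block_matrix m n a mm c b) z0"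
proof -
  define L where "L = labels m n mm"
  define N where "N = length L"
  define v where "v = vec N (\<lambda>r. fv z0 a (L ! r))"
  have A: "block_matrix m n a mm c b = mat N N (\<lambda>(r, s). entry m a c b (L ! r) (L ! s))"
    unfolding block_matrix_def L_def N_def Let_def by simp
  have dist: "distinct L" unfolding L_def by (rule distinct_labels)
  have "Inr 1 \<in> set L" unfolding L_def set_labels using assms(1) by auto
  then obtain r0 where r0: "r0 < N" "L ! r0 = Inr 1" unfolding N_def by (metis in_set_conv_nth)
  have v0: "v \<noteq> 0\<^sub>v N"
  proof
    assume "v = 0\<^sub>v N"
    then have "v $ r0 = 0" using r0 by simp
    then show False using r0 by (simp add: v_def)
  qed
  have mv: "block_matrix m n a mm c b *\<^sub>v v = z0 \<cdot>\<^sub>v v"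
  proof (rule eq_vecI)
    fix r assume r: "r < dim_vec (z0 \<cdot>\<^sub>v v)"
    then have r': "r < N" by (simp add: v_def)
    have "(block_matrix m n a mm c b *\<^sub>v v) $ r = (\<Sum>s<N. entry m a c b (L ! r) (L ! s) * fv z0 a (L ! s))"
      using r' unfolding A by (simp add: mult_mat_vec_def scalar_prod_def v_def lessThan_atLeast0)
    also have "\<dots> = sum_list (map (\<lambda>y. entry m a c b (L ! r) y * fv z0 a y) L)"
      by (simp add: sum_list_sum_nth N_def lessThan_atLeast0)
    also have "\<dots> = (\<Sum>y\<in>set L. entry m a c b (L ! r) y * fv z0 a y)"
      using dist by (simp add: sum_list_distinct_conv_sum_set)
    also have "\<dots> = z0 * fv z0 a (L ! r)"
      unfolding L_def by (rule row_all) (use r' assms in \<open>auto simp: L_def N_def\<close>)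
    also have "\<dots> = (z0 \<cdot>\<^sub>v v) $ r" using r' by (simp add: v_def)
    finally show "(block_matrix m n a mm c b *\<^sub>v v) $ r = (z0 \<cdot>\<^sub>v v) $ r" .
  qed (simp add: A v_def)
  show ?thesis unfolding eigenvalue_def eigenvector_def
    using v0 mv by (intro exI[of _ v]) (simp add: A v_def)
qed

end
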